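(* Let $r\ge2$ and let $F$ be an $r$-critical graph with $f$ vertices. For every $\epsilon>0$ there exists $\delta>0$ such that the following holds: if $n=\sum_{i=1}^r n_i>1/\delta$ and, for all $i\in[r]$, we have $0\le d_i\le n_i$, $|n_i-n/r|\le\delta n$ and $|\xi_i-d_i/n|\le\delta$, then, with $\boldsymbol{d}=(d_1,\dots,d_r)$ and $\boldsymbol{\xi}=(\xi_1,\dots,\xi_r)$, \[|F(n_1,\dots,n_r;\boldsymbol{d})-n^{f-1}P_F(\boldsymbol{\xi})|<\epsilon n^{f-1}.\]
   Context: A graph $F$ is $r$-critical if $\chi(F)=r+1$ and $F$ contains an edge $e$ with $\chi(F-e)=r$. A vertex $u$ of $F$ is critical if $\chi(F-u)=r$. $F(n_1,\dots,n_r;\boldsymbol{d})$ denotes the number of subgraphs isomorphic to $F$ in the graph $K(V_1,\dots,V_r)+z$, where $K(V_1,\dots,V_r)$ is the complete $r$-partite graph on disjoint parts with $|V_i|=n_i$, and $z$ is an extra vertex having exactly $d_i$ neighbors in $V_i$ for each $i$. Let $\mathrm{Aut}(F)$ denote the number of automorphisms of $F$. For $\boldsymbol{\xi}\in\mathbb{R}^r$, \[P_F(\boldsymbol{\xi})=\frac{1}{\mathrm{Aut}(F)}\sum_{u\text{ critical}}\ \sum_{\chi_u}\ \prod_{i=1}^r \frac{1}{r^{x_i}}\xi_i^{y_i},\] where the inner sum is over all proper colorings $\chi_u:V(F)\setminus\{u\}\to[r]$ of $F-u$, $y_i$ is the number of neighbors of $u$ receiving color $i$, and $x_i$ is the number of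 non-neighbors of $u$ (other than $u$) receiving color $i$. *)

theory Defs
  imports "HOL-Library.FuncSet" Complex_Main
begin

definition graph :: "'a set \<Rightarrow> 'a set set \<Rightarrow> bool" where
  "graph V E \<longleftrightarrow> finite V \<and> (\<forall>e\<in>E. \<exists>u v. e = {u, v} \<and> u \<noteq> v \<and> u \<in> V \<and> v \<in> V)"

definition proper_coloring :: "'a set \<Rightarrow> 'a set set \<Rightarrow> nat \<Rightarrow> ('a \<Rightarrow> nat) \<Rightarrow> bool" where
  "proper_coloring V E k c \<longleftrightarrow> (\<forall>v\<in>V. c v < k) \<and> (\<forall>u\<in>V. \<forall>v\<in>V. {u, v} \<in> E \<longrightarrow> c u \<noteq> c v)"

definition chromatic_number :: "'a set \<Rightarrow> 'a set set \<Rightarrow> nat" where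
  "chromatic_number V E = (LEAST k. \<exists>c. proper_coloring V E k c)"

definition del_vertex_edges :: "'a set set \<Rightarrow> 'a \<Rightarrow> 'a set set" where
  "del_vertex_edges E u = {e \<in> E. u \<notin> e}"

definition r_critical :: "nat \<Rightarrow> 'a set \<Rightarrow> 'a set set \<Rightarrow> bool" where
  "r_critical r V E \<longleftrightarrow> chromatic_number V E = r + 1 \<and>
     (\<exists>e\<in>E. chromatic_number V (E - {e}) = r)"

definition critical_vertex :: "nat \<Rightarrow> 'a set \<Rightarrow> 'a set set \<Rightarrow> 'a \<Rightarrow> bool" where
  "critical_vertex r V E u \<longleftrightarrow> u \<in> V \<and> chromatic_number (V - {u}) (del_vertex_edges E u) = r"

definition num_aut :: "'a set \<Rightarrow> 'a set set \<Rightarrow> nat" where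
  "num_aut V E = card {\<sigma> \<in> V \<rightarrow>\<^sub>E V. bij_betw \<sigma> V V \<and>
       (\<forall>u\<in>V. \<forall>v\<in>V. {u, v} \<in> E \<longleftrightarrow> {\<sigma> u, \<sigma> v} \<in> E)}"

definition isomorphic :: "'a set \<Rightarrow> 'a set set \<Rightarrow> 'b set \<Rightarrow> 'b set set \<Rightarrow> bool" where
  "isomorphic V E W D \<longleftrightarrow> (\<exists>\<phi>. bij_betw \<phi> V W \<and>
       (\<forall>u\<in>V. \<forall>v\<in>V. {u, v} \<in> E \<longleftrightarrow> {\<phi> u, \<phi> v} \<in> D))"

definition subgraph_count :: "'a set \<Rightarrow> 'a set set \<Rightarrow> 'b set \<Rightarrow> 'b set set \<Rightarrow> nat" where
  "subgraph_count V E VH EH = card {(W, D). W \<subseteq> VH \<and> D \<subseteq> EH \<and> (\<forall>e\<in>D. e \<subseteq> W) \<and> isomorphic V E W D}"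

text \<open>Host graph K(V_1,...,V_r)+z: part V_i = {Some (i,j) | j < n_i} (i < r), z = None,
  z adjacent to the d_i vertices Some (i,j), j < d_i, of V_i.\<close>
definition host_V :: "nat \<Rightarrow> (nat \<Rightarrow> nat) \<Rightarrow> (nat \<times> nat) option set" where
  "host_V r ns = insert None {Some (i, j) | i j. i < r \<and> j < ns i}"

definition host_E :: "nat \<Rightarrow> (nat \<Rightarrow> nat) \<Rightarrow> (nat \<Rightarrow> nat) \<Rightarrow> (nat \<times> nat) option set set" where
  "host_E r ns ds =
     {{Some (i, j), Some (i', j')} | i j i' j'. i < r \<and> j < ns i \<and> i' < r \<and> j' < ns i' \<and> i \<noteq> i'}
   \<union> {{None, Some (i, j)} | i j. i < r \<and> j < ds i}"

definition F_count :: "'a set \<Rightarrow> 'a set set \<Rightarrow> nat \<Rightarrow> (nat \<Rightarrow> nat) \<Rightarrow> (nat \<Rightarrow> nat) \<Rightarrow> nat" where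
  "F_count V E r ns ds = subgraph_count V E (host_V r ns) (host_E r ns ds)"

definition P_F :: "'a set \<Rightarrow> 'a set set \<Rightarrow> nat \<Rightarrow> (nat \<Rightarrow> real) \<Rightarrow> real" where
  "P_F V E r \<xi> = (1 / real (num_aut V E)) *
     (\<Sum>u\<in>{u\<in>V. critical_vertex r V E u}.
        \<Sum>c\<in>{c \<in> (V - {u}) \<rightarrow>\<^sub>E {..<r}. proper_coloring (V - {u}) (del_vertex_edges E u) r c}.
          \<Prod>i<r. (1 / real r ^ card {v \<in> V - {u}. {u, v} \<notin> E \<and> c v = i}) *
                   \<xi> i ^ card {v \<in> V - {u}. {u, v} \<in> E \<and> c v = i})"

end

theory Submission
  imports Defs
begin

lemma card_inj_PiE_list:
  assumes "distinct xs" "sorted_wrt (\<lambda>x y. T x \<inter> T y = {} \<or> T x \<subseteq> T y) xs"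
    "\<forall>x\<in>set xs. finite (T x)"
  shows "card {g \<in> PiE (set xs) T. inj_on g (set xs)} =
    (\<Prod>j<length xs. card (T (xs!j)) - card {x\<in>set (take j xs). T x \<subseteq> T (xs!j)})"
  using assms
proof (induction xs rule: rev_induct)
  case Nil
  then show ?case by simp
next
  case (snoc a xs)
  let ?A = "set xs"
  let ?S = "{g \<in> PiE ?A T. inj_on g ?A}"
  let ?S' = "{g \<in> PiE (insert a ?A) T. inj_on g (insert a ?A)}"
  have a_notin: "a \<notin> ?A" using snoc.prems by simp
  have R: "\<forall>x\<in>?A. T x \<inter> T a = {} \<or> T x \<subseteq> T a" using snoc.prems by (simp add: sorted_wrt_append)
  have IH: "card ?S = (\<Prod>j<length xs. card (T (xs!j)) - card {x\<in>set (take j xs). T x \<subseteq> T (xs!j)})"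
    using snoc by (simp add: sorted_wrt_append)
  define k where "k = card {x\<in>?A. T x \<subseteq> T a}"
  have finTa: "finite (T a)" using snoc.prems by simp
  have finS: "finite ?S" 
    by (rule finite_subset[of _ "PiE ?A T"]) (use snoc.prems in \<open>auto intro!: finite_PiE\<close>)
  have bij: "bij_betw (\<lambda>g. (restrict g ?A, g a)) ?S' (SIGMA g:?S. T a - g ` ?A)"
  proof (rule bij_betw_byWitness[where f' = "\<lambda>(g,y). g(a:=y)"])
    show "\<forall>g\<in>?S'. (\<lambda>(g, y). g(a := y)) (restrict g ?A, g a) = g"
      by (auto simp: fun_eq_iff PiE_def extensional_def)
    show "\<forall>p\<in>(SIGMA g:?S. T a - g ` ?A). (\<lambda>g. (restrict g ?A, g a)) ((\<lambda>(g, y). g(a := y)) p) = p"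
      using a_notin by (auto simp: fun_eq_iff PiE_def extensional_def)
    show "(\<lambda>g. (restrict g ?A, g a)) ` ?S' \<subseteq> (SIGMA g:?S. T a - g ` ?A)"
      using a_notin by (auto simp: inj_on_def)
    show "(\<lambda>(g, y). g(a := y)) ` (SIGMA g:?S. T a - g ` ?A) \<subseteq> ?S'"
    proof
      fix h assume "h \<in> (\<lambda>(g, y). g(a := y)) ` (SIGMA g:?S. T a - g ` ?A)"
      then obtain g y where h: "h = g(a:=y)" and g: "g \<in> PiE ?A T" "inj_on g ?A" and y: "y \<in> T a" "y \<notin> g ` ?A"
        by auto
      show "h \<in> ?S'" unfolding h
        using g y a_notin by (auto simp: PiE_def extensional_def inj_on_def)
    qed
  qed
  have cardfib: "card (T a - g ` ?A) = card (T a) - k" if g: "g \<in> ?S" for g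
  proof -
    have eq: "T a \<inter> g ` ?A = g ` {x\<in>?A. T x \<subseteq> T a}"
    proof
      show "T a \<inter> g ` ?A \<subseteq> g ` {x\<in>?A. T x \<subseteq> T a}"
      proof
        fix y assume "y \<in> T a \<inter> g ` ?A"
        then obtain x where x: "x \<in> ?A" "y = g x" "y \<in> T a" by auto
        have "g x \<in> T x" using g x(1) by auto
        then have "T x \<subseteq> T a" using R x by blast
        then show "y \<in> g ` {x\<in>?A. T x \<subseteq> T a}" using x by auto
      qed
      show "g ` {x\<in>?A. T x \<subseteq> T a} \<subseteq> T a \<inter> g ` ?A" using g by auto
    qed
    have "card (g ` {x\<in>?A. T x \<subseteq> T a}) = k" unfolding k_def
      by (rule card_image) (use g in \<open>auto intro: inj_on_subset\<close>)
    then show ?thesis using card_Diff_subset_Int[of "T a" "g ` ?A"] eq finTa by simp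
  qed
  have "card ?S' = card (SIGMA g:?S. T a - g ` ?A)" using bij by (rule bij_betw_same_card)
  also have "\<dots> = (\<Sum>g\<in>?S. card (T a - g ` ?A))"
    using finS finTa by (simp add: card_SigmaI)
  also have "\<dots> = card ?S * (card (T a) - k)" using cardfib by simp
  finally have C: "card ?S' = card ?S * (card (T a) - k)" .
  have P: "(\<Prod>j<length (xs@[a]). card (T ((xs@[a])!j)) - card {x\<in>set (take j (xs@[a])). T x \<subseteq> T ((xs@[a])!j)})
     = (\<Prod>j<length xs. card (T (xs!j)) - card {x\<in>set (take j xs). T x \<subseteq> T (xs!j)}) * (card (T a) - k)"
    by (simp add: k_def nth_append)
  show ?case using C P IH by simp
qed



lemma prod_approx:
  fixes a b :: "nat \<Rightarrow> real"
  assumes "\<And>j. j < m \<Longrightarrow> \<bar>a j - b j\<bar> \<le> \<eta>" "\<And>j. j < m \<Longrightarrow> \<bar>a j\<bar> \<le> M"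
    "\<And>j. j < m \<Longrightarrow> \<bar>b j\<bar> \<le> M" "M \<ge> 1"
  shows "\<bar>(\<Prod>j<m. a j) - (\<Prod>j<m. b j)\<bar> \<le> real m * M ^ m * \<eta>"
  using assms
proof (induction m)
  case 0
  then show ?case by simp
next
  case (Suc m)
  have eta: "\<eta> \<ge> 0" using Suc.prems(1)[of 0] by simp
  have IH: "\<bar>(\<Prod>j<m. a j) - (\<Prod>j<m. b j)\<bar> \<le> real m * M ^ m * \<eta>" using Suc by simp
  have pb: "\<bar>\<Prod>j<m. b j\<bar> \<le> M ^ m"
    unfolding abs_prod by (rule order.trans[OF prod_mono[of _ _ "\<lambda>_. M"]]) (use Suc.prems in auto)
  have eq: "(\<Prod>j<Suc m. a j) - (\<Prod>j<Suc m. b j) = a m * ((\<Prod>j<m. a j) - (\<Prod>j<m. b j)) + (a m - b m) * (\<Prod>j<m. b j)"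
    by (simp add: algebra_simps)
  have "\<bar>a m * ((\<Prod>j<m. a j) - (\<Prod>j<m. b j))\<bar> \<le> M * (real m * M ^ m * \<eta>)"
    unfolding abs_mult by (rule mult_mono) (use Suc.prems IH in auto)
  moreover have "\<bar>(a m - b m) * (\<Prod>j<m. b j)\<bar> \<le> \<eta> * M ^ m"
    unfolding abs_mult by (rule mult_mono) (use Suc.prems pb eta in auto)
  moreover have "\<eta> * M ^ m \<le> \<eta> * M ^ Suc m"
    using Suc.prems(4) eta by (intro mult_left_mono) auto
  ultimately have "\<bar>(\<Prod>j<Suc m. a j) - (\<Prod>j<Suc m. b j)\<bar> \<le> M * (real m * M ^ m * \<eta>) + \<eta> * M ^ Suc m"
    unfolding eq by linarith
  also have "\<dots> = real (Suc m) * M ^ Suc m * \<eta>" by (simp add: algebra_simps)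
  finally show ?case .
qed

lemma chrom_le: "proper_coloring V E k c \<Longrightarrow> chromatic_number V E \<le> k"
  unfolding chromatic_number_def by (rule Least_le) blast

lemma graph_noloop: "graph V E \<Longrightarrow> {u} \<notin> E"
proof
  assume "graph V E" "{u} \<in> E"
  then obtain a b where ab: "{u} = {a,b}" "a \<noteq> b" unfolding graph_def by blast
  then have "a = u" "b = u" by (metis insertCI singletonD)+
  then show False using ab by simp
qed

lemma chrom_ex: "finite V \<Longrightarrow> \<forall>u. {u} \<notin> E \<Longrightarrow> \<exists>c. proper_coloring V E (chromatic_number V E) c"
proof -
  assume "finite V" and nl: "\<forall>u. {u} \<notin> E"
  obtain g and m :: nat where g: "g ` V = {i. i < m}" "inj_on g V"
    using finite_imp_inj_to_nat_seg[OF \<open>finite V\<close>] by blast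
  have "proper_coloring V E m g"
    unfolding proper_coloring_def
  proof (intro conjI ballI impI)
    fix v assume "v \<in> V"
    then have "g v \<in> g ` V" by blast
    then show "g v < m" using g(1) by simp
  next
    fix a b assume ab: "a \<in> V" "b \<in> V" "{a,b} \<in> E"
    show "g a \<noteq> g b"
    proof
      assume "g a = g b"
      then have "a = b" using g(2) ab unfolding inj_on_def by blast
      then show False using ab nl by simp
    qed
  qed
  then have "\<exists>k c. proper_coloring V E k c" by blast
  then show ?thesis unfolding chromatic_number_def by (rule LeastI2_ex) blast
qed



definition Emb :: "'a set \<Rightarrow> 'a set set \<Rightarrow> 'b set \<Rightarrow> 'b set set \<Rightarrow> ('a \<Rightarrow> 'b) set" where
 "Emb V E HV HE = {\<phi> \<in> V \<rightarrow>\<^sub>E HV. inj_on \<phi> V \<and> (\<forall>a\<in>V. \<forall>b\<in>V. {a,b}\<in>E \<longrightarrow> {\<phi> a, \<phi> b} \<in> HE)}"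

definition Autset :: "'a set \<Rightarrow> 'a set set \<Rightarrow> ('a \<Rightarrow> 'a) set" where
  "Autset V E = {\<sigma> \<in> V \<rightarrow>\<^sub>E V. bij_betw \<sigma> V V \<and>
       (\<forall>u\<in>V. \<forall>v\<in>V. {u, v} \<in> E \<longleftrightarrow> {\<sigma> u, \<sigma> v} \<in> E)}"

lemma Autset_pi: "\<sigma> \<in> Autset V E \<Longrightarrow> \<sigma> \<in> V \<rightarrow>\<^sub>E V"
  unfolding Autset_def by blast

lemma Autset_bij: "\<sigma> \<in> Autset V E \<Longrightarrow> bij_betw \<sigma> V V"
  unfolding Autset_def by blast

lemma Autset_E: "\<sigma> \<in> Autset V E \<Longrightarrow> \<forall>u\<in>V. \<forall>v\<in>V. {u, v} \<in> E \<longleftrightarrow> {\<sigma> u, \<sigma> v} \<in> E"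
  unfolding Autset_def by blast

lemma graph_edge: "graph V E \<Longrightarrow> e \<in> E \<Longrightarrow> \<exists>a b. e = {a,b} \<and> a \<noteq> b \<and> a \<in> V \<and> b \<in> V"
  unfolding graph_def by blast

lemma L1:
  assumes "graph V E" "inj_on \<phi> V" "a \<in> V" "b \<in> V"
  shows "{\<phi> a, \<phi> b} \<in> (`) \<phi> ` E \<longleftrightarrow> {a,b} \<in> E"
proof
  assume "{\<phi> a, \<phi> b} \<in> (`) \<phi> ` E"
  then obtain e where e: "e \<in> E" "{\<phi> a, \<phi> b} = \<phi> ` e" by auto
  obtain x y where "e = {x,y}" "x \<in> V" "y \<in> V" using graph_edge[OF assms(1) e(1)] by blast
  then have "\<phi> ` {a,b} = \<phi> ` e" "e \<subseteq> V" "{a,b} \<subseteq> V" using e assms by auto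
  then have "{a,b} = e" using inj_on_image_eq_iff[OF assms(2)] by blast
  then show "{a,b} \<in> E" using e by simp
next
  assume "{a,b} \<in> E"
  then show "{\<phi> a, \<phi> b} \<in> (`) \<phi> ` E" by (metis image_empty image_insert imageI)
qed

lemma aut_edges:
  assumes gV: "graph V E" and s: "\<sigma> \<in> Autset V E"
  shows "(`) \<sigma> ` E = E"
proof -
  have bij: "bij_betw \<sigma> V V" using Autset_bij[OF s] .
  have sE: "\<forall>u\<in>V. \<forall>v\<in>V. {u, v} \<in> E \<longleftrightarrow> {\<sigma> u, \<sigma> v} \<in> E" using Autset_E[OF s] .
  have sE': "\<And>u v. u \<in> V \<Longrightarrow> v \<in> V \<Longrightarrow> {u, v} \<in> E \<longleftrightarrow> {\<sigma> u, \<sigma> v} \<in> E"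
    using sE by blast
  have im: "\<sigma> ` V = V" using bij by (simp add: bij_betw_def)
  show ?thesis
  proof
    show "(`) \<sigma> ` E \<subseteq> E"
    proof
      fix e' assume "e' \<in> (`) \<sigma> ` E"
      then obtain e where e: "e \<in> E" "e' = \<sigma> ` e" by auto
      obtain x y where xy: "e = {x,y}" "x \<in> V" "y \<in> V" using graph_edge[OF gV e(1)] by blast
      have "{\<sigma> x, \<sigma> y} \<in> E" using sE'[OF xy(2,3)] e(1) xy(1) by simp
      then show "e' \<in> E" using e(2) xy(1) by simp
    qed
    show "E \<subseteq> (`) \<sigma> ` E"
    proof
      fix e assume e: "e \<in> E"
      obtain x y where xy: "e = {x,y}" "x \<in> V" "y \<in> V" using graph_edge[OF gV e] by blast
      have "x \<in> \<sigma> ` V" "y \<in> \<sigma> ` V" using im xy by auto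
      then obtain x' y' where x'y': "x' \<in> V" "y' \<in> V" "x = \<sigma> x'" "y = \<sigma> y'" by blast
      have "{x',y'} \<in> E" using sE'[OF x'y'(1,2)] e xy(1) x'y'(3,4) by simp
      moreover have "e = \<sigma> ` {x',y'}" using xy(1) x'y'(3,4) by simp
      ultimately show "e \<in> (`) \<sigma> ` E" by blast
    qed
  qed
qed

definition Phi :: "'a set \<Rightarrow> 'a set set \<Rightarrow> ('a \<Rightarrow> 'b) \<Rightarrow> 'b set \<times> 'b set set" where
  "Phi V E \<phi> = (\<phi> ` V, (`) \<phi> ` E)"

lemma fiber_card:
  assumes gV: "graph V E" and \<psi>: "\<psi> \<in> Emb V E HV HE"
  shows "card {\<phi> \<in> Emb V E HV HE. Phi V E \<phi> = Phi V E \<psi>} = card (Autset V E)"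
proof -
  have fin: "finite V" using gV unfolding graph_def by simp
  have \<psi>inj: "inj_on \<psi> V" and \<psi>pi: "\<psi> \<in> V \<rightarrow>\<^sub>E HV" using \<psi> unfolding Emb_def by auto
  have "bij_betw (\<lambda>\<sigma>. compose V \<psi> \<sigma>) (Autset V E) {\<phi> \<in> Emb V E HV HE. Phi V E \<phi> = Phi V E \<psi>}"
  proof (rule bij_betw_imageI)
    show "inj_on (\<lambda>\<sigma>. compose V \<psi> \<sigma>) (Autset V E)"
    proof (rule inj_onI)
      fix \<sigma>1 \<sigma>2 assume s: "\<sigma>1 \<in> Autset V E" "\<sigma>2 \<in> Autset V E" "compose V \<psi> \<sigma>1 = compose V \<psi> \<sigma>2"
      show "\<sigma>1 = \<sigma>2"
      proof
        fix x show "\<sigma>1 x = \<sigma>2 x"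
        proof (cases "x \<in> V")
          case True
          then have "\<psi> (\<sigma>1 x) = \<psi> (\<sigma>2 x)" using s(3) unfolding compose_def by (metis restrict_apply')
          moreover have "\<sigma>1 x \<in> V" "\<sigma>2 x \<in> V" using Autset_pi[OF s(1)] Autset_pi[OF s(2)] True by auto
          ultimately show ?thesis using \<psi>inj by (simp add: inj_on_def)
        next
          case False
          then show ?thesis using Autset_pi[OF s(1)] Autset_pi[OF s(2)] by (auto simp: PiE_def extensional_def)
        qed
      qed
    qed
    show "(\<lambda>\<sigma>. compose V \<psi> \<sigma>) ` Autset V E = {\<phi> \<in> Emb V E HV HE. Phi V E \<phi> = Phi V E \<psi>}"
    proof
      show "(\<lambda>\<sigma>. compose V \<psi> \<sigma>) ` Autset V E \<subseteq> {\<phi> \<in> Emb V E HV HE. Phi V E \<phi> = Phi V E \<psi>}"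
      proof clarify
        fix \<sigma> assume s: "\<sigma> \<in> Autset V E"
        have bij: "bij_betw \<sigma> V V" using Autset_bij[OF s] .
        have sE: "\<forall>u\<in>V. \<forall>v\<in>V. {u, v} \<in> E \<longleftrightarrow> {\<sigma> u, \<sigma> v} \<in> E" using Autset_E[OF s] .
        have sV: "\<And>x. x \<in> V \<Longrightarrow> \<sigma> x \<in> V" using bij bij_betwE by blast
        let ?\<phi> = "compose V \<psi> \<sigma>"
        have phx: "\<And>x. x \<in> V \<Longrightarrow> ?\<phi> x = \<psi> (\<sigma> x)" by (simp add: compose_def)
        have img: "\<And>e. e \<subseteq> V \<Longrightarrow> ?\<phi> ` e = \<psi> ` (\<sigma> ` e)" using phx by (auto simp: image_iff subset_iff)
        have "?\<phi> \<in> Emb V E HV HE"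
          unfolding Emb_def
        proof (intro CollectI conjI ballI impI)
          show "?\<phi> \<in> V \<rightarrow>\<^sub>E HV" using \<psi>pi sV by (auto simp: compose_def)
          show "inj_on ?\<phi> V" using \<psi>inj bij unfolding inj_on_def bij_betw_def
            by (metis phx sV)
          fix a b assume ab: "a \<in> V" "b \<in> V" "{a,b} \<in> E"
          then have "{\<sigma> a, \<sigma> b} \<in> E" using sE by blast
          then have "{\<psi> (\<sigma> a), \<psi> (\<sigma> b)} \<in> HE" using \<psi> sV ab unfolding Emb_def by blast
          then show "{?\<phi> a, ?\<phi> b} \<in> HE" using phx ab by simp
        qed
        moreover have "Phi V E ?\<phi> = Phi V E \<psi>"
        proof -
          have "?\<phi> ` V = \<psi> ` (\<sigma> ` V)" using img by simp
          also have "\<sigma> ` V = V" using bij by (simp add: bij_betw_def)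
          finally have 1: "?\<phi> ` V = \<psi> ` V" .
          have "(`) ?\<phi> ` E = (`) \<psi> ` ((`) \<sigma> ` E)"
          proof -
            have "\<And>e. e \<in> E \<Longrightarrow> e \<subseteq> V" using gV graph_edge by fastforce
            then have "(`) ?\<phi> ` E = (\<lambda>e. \<psi> ` (\<sigma> ` e)) ` E" using img by (auto simp: image_iff)
            then show ?thesis by (simp add: image_comp o_def)
          qed
          then have "(`) ?\<phi> ` E = (`) \<psi> ` E" using aut_edges[OF gV s] by simp
          then show ?thesis using 1 unfolding Phi_def by simp
        qed
        ultimately show "?\<phi> \<in> Emb V E HV HE \<and> Phi V E ?\<phi> = Phi V E \<psi>" by simp
      qed
      show "{\<phi> \<in> Emb V E HV HE. Phi V E \<phi> = Phi V E \<psi>} \<subseteq> (\<lambda>\<sigma>. compose V \<psi> \<sigma>) ` Autset V E"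
      proof clarify
        fix \<phi> assume \<phi>: "\<phi> \<in> Emb V E HV HE" and P: "Phi V E \<phi> = Phi V E \<psi>"
        have \<phi>inj: "inj_on \<phi> V" and \<phi>pi: "\<phi> \<in> V \<rightarrow>\<^sub>E HV" using \<phi> unfolding Emb_def by auto
        have imV: "\<phi> ` V = \<psi> ` V" and imE: "(`) \<phi> ` E = (`) \<psi> ` E" using P unfolding Phi_def by auto
        let ?\<sigma> = "compose V (inv_into V \<psi>) \<phi>"
        have inV: "\<And>x. x \<in> V \<Longrightarrow> \<phi> x \<in> \<psi> ` V" using imV by auto
        have sx: "\<And>x. x \<in> V \<Longrightarrow> ?\<sigma> x = inv_into V \<psi> (\<phi> x)" by (simp add: compose_def)
        have sV: "\<And>x. x \<in> V \<Longrightarrow> ?\<sigma> x \<in> V" using sx inV inv_into_into by metis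
        have psis: "\<And>x. x \<in> V \<Longrightarrow> \<psi> (?\<sigma> x) = \<phi> x" using sx inV f_inv_into_f by metis
        have sinj: "inj_on ?\<sigma> V" using \<phi>inj psis unfolding inj_on_def by metis
        have simg: "?\<sigma> ` V = V" using endo_inj_surj[OF fin _ sinj] sV by blast
        have "?\<sigma> \<in> Autset V E"
          unfolding Autset_def
        proof (intro CollectI conjI ballI)
          show "?\<sigma> \<in> V \<rightarrow>\<^sub>E V" using sV by (auto simp: compose_def)
          show "bij_betw ?\<sigma> V V" using sinj simg by (simp add: bij_betw_def)
          fix u v assume uv: "u \<in> V" "v \<in> V"
          have "{u,v} \<in> E \<longleftrightarrow> {\<phi> u, \<phi> v} \<in> (`) \<phi> ` E" using L1[OF gV \<phi>inj uv] by simp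
          also have "\<dots> \<longleftrightarrow> {\<psi> (?\<sigma> u), \<psi> (?\<sigma> v)} \<in> (`) \<psi> ` E" using imE psis uv by simp
          also have "\<dots> \<longleftrightarrow> {?\<sigma> u, ?\<sigma> v} \<in> E" using L1[OF gV \<psi>inj sV[OF uv(1)] sV[OF uv(2)]] .
          finally show "{u,v} \<in> E \<longleftrightarrow> {?\<sigma> u, ?\<sigma> v} \<in> E" .
        qed
        moreover have "compose V \<psi> ?\<sigma> = \<phi>"
        proof
          fix x show "compose V \<psi> ?\<sigma> x = \<phi> x"
            using psis \<phi>pi by (cases "x \<in> V") (auto simp: compose_def PiE_def extensional_def)
        qed
        ultimately show "\<phi> \<in> (\<lambda>\<sigma>. compose V \<psi> \<sigma>) ` Autset V E" by (metis imageI)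
      qed
    qed
  qed
  then show ?thesis by (simp add: bij_betw_same_card)
qed

lemma copies_eq:
  assumes gV: "graph V E" and gH: "graph HV HE"
  shows "{(W, D). W \<subseteq> HV \<and> D \<subseteq> HE \<and> (\<forall>e\<in>D. e \<subseteq> W) \<and> isomorphic V E W D}
         = Phi V E ` Emb V E HV HE"
proof
  show "Phi V E ` Emb V E HV HE \<subseteq> {(W, D). W \<subseteq> HV \<and> D \<subseteq> HE \<and> (\<forall>e\<in>D. e \<subseteq> W) \<and> isomorphic V E W D}"
  proof (rule subsetI, elim imageE)
    fix c \<phi> assume c: "c = Phi V E \<phi>" and \<phi>: "\<phi> \<in> Emb V E HV HE"
    have \<phi>inj: "inj_on \<phi> V" and \<phi>pi: "\<phi> \<in> V \<rightarrow>\<^sub>E HV"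
      and \<phi>E: "\<forall>a\<in>V. \<forall>b\<in>V. {a,b}\<in>E \<longrightarrow> {\<phi> a, \<phi> b} \<in> HE" using \<phi> unfolding Emb_def by auto
    have eV: "\<And>e. e \<in> E \<Longrightarrow> \<exists>a b. e = {a,b} \<and> a \<in> V \<and> b \<in> V" using graph_edge[OF gV] by blast
    have 1: "\<phi> ` V \<subseteq> HV" using \<phi>pi by auto
    have 2: "(`) \<phi> ` E \<subseteq> HE"
    proof
      fix d assume "d \<in> (`) \<phi> ` E"
      then obtain e where "e \<in> E" "d = \<phi> ` e" by auto
      then obtain a b where "e = {a,b}" "a \<in> V" "b \<in> V" "{a,b} \<in> E" using eV by blast
      then show "d \<in> HE" using \<phi>E \<open>d = \<phi> ` e\<close> by auto
    qed
    have 3: "\<forall>d\<in>(`) \<phi> ` E. d \<subseteq> \<phi> ` V" using eV by fastforce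
    have 4: "isomorphic V E (\<phi> ` V) ((`) \<phi> ` E)"
      unfolding isomorphic_def using \<phi>inj L1[OF gV \<phi>inj] by (metis inj_on_imp_bij_betw)
    show "c \<in> {(W, D). W \<subseteq> HV \<and> D \<subseteq> HE \<and> (\<forall>e\<in>D. e \<subseteq> W) \<and> isomorphic V E W D}"
      using 1 2 3 4 unfolding c Phi_def by simp
  qed
  show "{(W, D). W \<subseteq> HV \<and> D \<subseteq> HE \<and> (\<forall>e\<in>D. e \<subseteq> W) \<and> isomorphic V E W D} \<subseteq> Phi V E ` Emb V E HV HE"
  proof clarify
    fix W D assume W: "W \<subseteq> HV" and D: "D \<subseteq> HE" and DW: "\<forall>e\<in>D. e \<subseteq> W" and iso: "isomorphic V E W D"
    obtain \<psi> where bij: "bij_betw \<psi> V W" and \<psi>E: "\<forall>u\<in>V. \<forall>v\<in>V. {u, v} \<in> E \<longleftrightarrow> {\<psi> u, \<psi> v} \<in> D"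
      using iso unfolding isomorphic_def by blast
    let ?\<phi> = "restrict \<psi> V"
    have inj: "inj_on \<psi> V" and im: "\<psi> ` V = W" using bij by (auto simp: bij_betw_def)
    have "?\<phi> \<in> Emb V E HV HE"
      unfolding Emb_def using W D im inj \<psi>E by (auto simp: inj_on_def)
    moreover have "Phi V E ?\<phi> = (W, D)"
    proof -
      have a: "?\<phi> ` V = W" using im by auto
      have b: "(`) ?\<phi> ` E = D"
      proof
        show "(`) ?\<phi> ` E \<subseteq> D"
        proof
          fix d assume "d \<in> (`) ?\<phi> ` E"
          then obtain e where e: "e \<in> E" "d = ?\<phi> ` e" by auto
          then obtain a b where "e = {a,b}" "a \<in> V" "b \<in> V" using graph_edge[OF gV] by blast
          then show "d \<in> D" using e \<psi>E by auto
        qed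
        show "D \<subseteq> (`) ?\<phi> ` E"
        proof
          fix d assume d: "d \<in> D"
          then obtain x y where xy: "d = {x,y}" using graph_edge[OF gH] D by blast
          have "x \<in> W" "y \<in> W" using DW d xy by auto
          then obtain a b where ab: "a \<in> V" "b \<in> V" "x = \<psi> a" "y = \<psi> b" using im by blast
          then have "{a,b} \<in> E" using \<psi>E d xy by auto
          moreover have "d = ?\<phi> ` {a,b}" using ab xy by auto
          ultimately show "d \<in> (`) ?\<phi> ` E" by blast
        qed
      qed
      show ?thesis using a b unfolding Phi_def by simp
    qed
    ultimately show "(W, D) \<in> Phi V E ` Emb V E HV HE" by (metis imageI)
  qed
qed

lemma emb_count:
  assumes gV: "graph V E" and gH: "graph HV HE"
  shows "card (Emb V E HV HE) = subgraph_count V E HV HE * num_aut V E"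
proof -
  have finV: "finite V" and finH: "finite HV" using gV gH unfolding graph_def by auto
  have finE: "finite (Emb V E HV HE)"
    by (rule finite_subset[of _ "V \<rightarrow>\<^sub>E HV"]) (auto simp: Emb_def finV finH intro!: finite_PiE)
  let ?F = "\<lambda>c. {\<phi> \<in> Emb V E HV HE. Phi V E \<phi> = c}"
  have U: "Emb V E HV HE = (\<Union>c\<in>Phi V E ` Emb V E HV HE. ?F c)" by auto
  have "card (Emb V E HV HE) = (\<Sum>c\<in>Phi V E ` Emb V E HV HE. card (?F c))"
    by (subst U, rule card_UN_disjoint) (use finE in auto)
  also have "\<dots> = (\<Sum>c\<in>Phi V E ` Emb V E HV HE. card (Autset V E))"
    by (rule sum.cong) (auto intro: fiber_card[OF gV])
  also have "\<dots> = card (Phi V E ` Emb V E HV HE) * num_aut V E"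
    by (simp add: num_aut_def Autset_def)
  finally show ?thesis unfolding subgraph_count_def copies_eq[OF gV gH] .
qed



definition "Col r V E u = {c \<in> (V-{u}) \<rightarrow>\<^sub>E {..<r}. proper_coloring (V-{u}) (del_vertex_edges E u) r c}"
definition limv :: "(nat \<Rightarrow> nat) \<Rightarrow> (nat \<Rightarrow> nat) \<Rightarrow> 'a set set \<Rightarrow> 'a \<Rightarrow> ('a \<Rightarrow> nat) \<Rightarrow> 'a \<Rightarrow> nat" where "limv ns ds E u c v = (if {u,v}\<in>E then ds (c v) else ns (c v))"
definition "Tset ns ds E u c v = (\<lambda>j. Some (c v, j)) ` {..<limv ns ds E u c v}"
definition "EmbUC r ns ds V E u c = {\<phi> \<in> V \<rightarrow>\<^sub>E host_V r ns. inj_on \<phi> V \<and> \<phi> u = None \<and>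
   (\<forall>v\<in>V-{u}. \<phi> v \<in> Tset ns ds E u c v)}"

lemma HE_SS: "{Some (i,j), Some (i',j')} \<in> host_E r ns ds \<longleftrightarrow> i<r \<and> j<ns i \<and> i'<r \<and> j'<ns i' \<and> i\<noteq>i'"
  unfolding host_E_def by (auto simp: doubleton_eq_iff)

lemma HE_NS: "{None, Some (i,j)} \<in> host_E r ns ds \<longleftrightarrow> i<r \<and> j < ds i"
  unfolding host_E_def by (auto simp: doubleton_eq_iff)

lemma HV_mem: "x \<in> host_V r ns \<longleftrightarrow> x = None \<or> (\<exists>i j. x = Some (i,j) \<and> i<r \<and> j<ns i)"
  unfolding host_V_def by auto

lemma graph_host:
  assumes "\<forall>i<r. ds i \<le> ns i"
  shows "graph (host_V r ns) (host_E r ns ds)"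
proof -
  have "host_V r ns = insert None (Some ` (SIGMA i:{..<r}. {..<ns i}))"
    unfolding host_V_def by auto
  then have fin: "finite (host_V r ns)" by simp
  show ?thesis unfolding graph_def
  proof (intro conjI fin ballI)
    fix e assume "e \<in> host_E r ns ds"
    then consider (A) i j i' j' where "e = {Some (i, j), Some (i', j')}" "i < r" "j < ns i" "i' < r" "j' < ns i'" "i \<noteq> i'"
      | (B) i j where "e = {None, Some (i, j)}" "i < r" "j < ds i"
      unfolding host_E_def by blast
    then show "\<exists>u v. e = {u, v} \<and> u \<noteq> v \<and> u \<in> host_V r ns \<and> v \<in> host_V r ns"
    proof cases
      case A
      then show ?thesis unfolding HV_mem by blast
    next
      case B
      then have "j < ns i" using assms by (meson less_le_trans)
      then show ?thesis using B unfolding HV_mem by blast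
    qed
  qed
qed

lemma Tset_mem: "x \<in> Tset ns ds E u c v \<longleftrightarrow> (\<exists>j. x = Some (c v, j) \<and> j < limv ns ds E u c v)"
  unfolding Tset_def by auto

context
  fixes r :: nat and ns ds :: "nat \<Rightarrow> nat" and V :: "'a set" and E :: "'a set set"
  assumes gV: "graph V E" and chr: "chromatic_number V E = r + 1" and dsns: "\<forall>i<r. ds i \<le> ns i"
begin

lemma noloop: "{u} \<notin> E" using graph_noloop[OF gV] .

lemma Emb_decomp:
  "Emb V E (host_V r ns) (host_E r ns ds) = (\<Union>p\<in>Sigma V (Col r V E). EmbUC r ns ds V E (fst p) (snd p))"
proof
  show "Emb V E (host_V r ns) (host_E r ns ds) \<subseteq> (\<Union>p\<in>Sigma V (Col r V E). EmbUC r ns ds V E (fst p) (snd p))"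
  proof
    fix \<phi> assume \<phi>: "\<phi> \<in> Emb V E (host_V r ns) (host_E r ns ds)"
    have \<phi>V: "\<And>v. v \<in> V \<Longrightarrow> \<phi> v \<in> host_V r ns" and \<phi>pi: "\<phi> \<in> V \<rightarrow>\<^sub>E host_V r ns"
      and inj: "inj_on \<phi> V"
      and \<phi>E: "\<And>a b. a \<in> V \<Longrightarrow> b \<in> V \<Longrightarrow> {a,b}\<in>E \<Longrightarrow> {\<phi> a, \<phi> b} \<in> host_E r ns ds"
      using \<phi> unfolding Emb_def by auto
    have "\<exists>u\<in>V. \<phi> u = None"
    proof (rule ccontr)
      assume "\<not> (\<exists>u\<in>V. \<phi> u = None)"
      then have S: "\<And>v. v \<in> V \<Longrightarrow> \<exists>i j. \<phi> v = Some (i,j) \<and> i<r \<and> j<ns i" using \<phi>V HV_mem by metis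
      have "proper_coloring V E r (\<lambda>v. fst (the (\<phi> v)))"
        unfolding proper_coloring_def
      proof (intro conjI ballI impI)
        fix v assume "v \<in> V"
        then obtain i j where "\<phi> v = Some (i,j)" "i<r" using S by blast
        then show "fst (the (\<phi> v)) < r" by simp
      next
        fix a b assume ab: "a \<in> V" "b \<in> V" "{a,b} \<in> E"
        obtain i j i' j' where ij: "\<phi> a = Some (i,j)" "\<phi> b = Some (i',j')" using S ab by metis
        have "{Some (i,j), Some (i',j')} \<in> host_E r ns ds" using \<phi>E[OF ab] ij by simp
        then have "i \<noteq> i'" using HE_SS by blast
        then show "fst (the (\<phi> a)) \<noteq> fst (the (\<phi> b))" using ij by simp
      qed
      then have "chromatic_number V E \<le> r" by (rule chrom_le)
      then show False using chr by simp
    qed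
    then obtain u where u: "u \<in> V" "\<phi> u = None" by blast
    have S: "\<And>v. v \<in> V - {u} \<Longrightarrow> \<exists>i j. \<phi> v = Some (i,j) \<and> i<r \<and> j<ns i"
    proof -
      fix v assume v: "v \<in> V - {u}"
      have "\<phi> v \<noteq> None"
      proof
        assume "\<phi> v = None"
        then have "\<phi> v = \<phi> u" using u by simp
        then have "v = u" using inj_onD[OF inj] v u(1) by blast
        then show False using v by blast
      qed
      moreover have "\<phi> v \<in> host_V r ns" using \<phi>V v by blast
      ultimately show "\<exists>i j. \<phi> v = Some (i,j) \<and> i<r \<and> j<ns i" unfolding HV_mem by auto
    qed
    define c where "c = restrict (\<lambda>v. fst (the (\<phi> v))) (V-{u})"
    have cv: "\<And>v. v \<in> V - {u} \<Longrightarrow> c v = fst (the (\<phi> v))" unfolding c_def by simp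
    have "c \<in> Col r V E u"
      unfolding Col_def proper_coloring_def
    proof (intro CollectI conjI ballI impI)
      show "c \<in> (V-{u}) \<rightarrow>\<^sub>E {..<r}" unfolding c_def restrict_PiE_iff
      proof
        fix v assume "v \<in> V - {u}"
        then obtain i j where "\<phi> v = Some (i,j)" "i<r" using S by blast
        then show "fst (the (\<phi> v)) \<in> {..<r}" by simp
      qed
    next
      fix v assume v: "v \<in> V - {u}"
      then obtain i j where "\<phi> v = Some (i,j)" "i<r" using S by blast
      then show "c v < r" using cv[OF v] by simp
    next
      fix a b assume ab: "a \<in> V - {u}" "b \<in> V - {u}" "{a,b} \<in> del_vertex_edges E u"
      then have abE: "{a,b} \<in> E" unfolding del_vertex_edges_def by auto
      obtain i j i' j' where ij: "\<phi> a = Some (i,j)" "\<phi> b = Some (i',j')" using S ab by metis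
      have "{Some (i,j), Some (i',j')} \<in> host_E r ns ds" using \<phi>E[of a b] abE ab ij by simp
      then have "i \<noteq> i'" using HE_SS by blast
      then show "c a \<noteq> c b" using ij cv ab by simp
    qed
    moreover have "\<phi> \<in> EmbUC r ns ds V E u c"
      unfolding EmbUC_def
    proof (intro CollectI conjI ballI \<phi>pi inj u(2))
      fix v assume v: "v \<in> V - {u}"
      obtain i j where ij: "\<phi> v = Some (i,j)" "i<r" "j<ns i" using S[OF v] by blast
      have ci: "c v = i" using cv[OF v] ij by simp
      show "\<phi> v \<in> Tset ns ds E u c v"
      proof (cases "{u,v} \<in> E")
        case True
        then have "{\<phi> u, \<phi> v} \<in> host_E r ns ds" using \<phi>E[of u v] u v by blast
        then have "{None, Some (i,j)} \<in> host_E r ns ds" using u ij by simp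
        then have "j < ds i" using HE_NS by blast
        then show ?thesis using True ij ci by (auto simp: Tset_mem limv_def)
      next
        case False
        then show ?thesis using ij ci by (auto simp: Tset_mem limv_def)
      qed
    qed
    ultimately show "\<phi> \<in> (\<Union>p\<in>Sigma V (Col r V E). EmbUC r ns ds V E (fst p) (snd p))"
      by (intro UN_I[of "(u,c)"]) (use u(1) in auto)
  qed
  show "(\<Union>p\<in>Sigma V (Col r V E). EmbUC r ns ds V E (fst p) (snd p)) \<subseteq> Emb V E (host_V r ns) (host_E r ns ds)"
  proof clarify
    fix u c \<phi> assume u: "u \<in> V" and c: "c \<in> Col r V E u" and \<phi>: "\<phi> \<in> EmbUC r ns ds V E (fst (u,c)) (snd (u,c))"
    have \<phi>pi: "\<phi> \<in> V \<rightarrow>\<^sub>E host_V r ns" and inj: "inj_on \<phi> V" and \<phi>u: "\<phi> u = None"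
      and T: "\<And>v. v \<in> V - {u} \<Longrightarrow> \<exists>j. \<phi> v = Some (c v, j) \<and> j < limv ns ds E u c v"
      using \<phi> unfolding EmbUC_def Tset_mem by auto
    have cr: "\<And>v. v \<in> V - {u} \<Longrightarrow> c v < r" using c unfolding Col_def by auto
    have cp: "\<And>a b. a \<in> V - {u} \<Longrightarrow> b \<in> V - {u} \<Longrightarrow> {a,b} \<in> E \<Longrightarrow> c a \<noteq> c b"
      using c unfolding Col_def proper_coloring_def del_vertex_edges_def by auto
    have nbr: "\<And>v. v \<in> V - {u} \<Longrightarrow> {u,v} \<in> E \<Longrightarrow> {\<phi> u, \<phi> v} \<in> host_E r ns ds"
    proof -
      fix v assume v: "v \<in> V - {u}" and uv: "{u,v} \<in> E"
      obtain j where "\<phi> v = Some (c v, j)" "j < ds (c v)" using T[OF v] uv by (auto simp: limv_def)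
      then show "{\<phi> u, \<phi> v} \<in> host_E r ns ds" using \<phi>u HE_NS cr[OF v] by simp
    qed
    show "\<phi> \<in> Emb V E (host_V r ns) (host_E r ns ds)"
      unfolding Emb_def
    proof (intro CollectI conjI \<phi>pi inj ballI impI)
      fix a b assume ab: "a \<in> V" "b \<in> V" "{a,b} \<in> E"
      then have "a \<noteq> b" using noloop by auto
      show "{\<phi> a, \<phi> b} \<in> host_E r ns ds"
      proof (cases "a = u")
        case True
        then show ?thesis using nbr ab \<open>a \<noteq> b\<close> by auto
      next
        case a: False
        show ?thesis
        proof (cases "b = u")
          case True
          then show ?thesis using nbr[of a] ab a by (auto simp: insert_commute)
        next
          case b: False
          have av: "a \<in> V - {u}" "b \<in> V - {u}" using ab a b by auto
          obtain j j' where "\<phi> a = Some (c a, j)" "j < limv ns ds E u c a"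
             "\<phi> b = Some (c b, j')" "j' < limv ns ds E u c b" using T av by metis
          moreover have "limv ns ds E u c a \<le> ns (c a)" "limv ns ds E u c b \<le> ns (c b)"
            using dsns cr av by (auto simp: limv_def)
          ultimately show ?thesis using HE_SS cp[OF av ab(3)] cr av by auto
        qed
      qed
    qed
  qed
qed

lemma EmbUC_disj:
  assumes "p \<in> Sigma V (Col r V E)" "q \<in> Sigma V (Col r V E)" "p \<noteq> q"
  shows "EmbUC r ns ds V E (fst p) (snd p) \<inter> EmbUC r ns ds V E (fst q) (snd q) = {}"
proof (rule ccontr)
  assume "\<not> ?thesis"
  then obtain \<phi> where \<phi>: "\<phi> \<in> EmbUC r ns ds V E (fst p) (snd p)" "\<phi> \<in> EmbUC r ns ds V E (fst q) (snd q)" by blast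
  obtain u c u' c' where pq: "p = (u,c)" "q = (u',c')" by (cases p, cases q) auto
  have uV: "u \<in> V" "u' \<in> V" and cc: "c \<in> Col r V E u" "c' \<in> Col r V E u'" using assms pq by auto
  have "u = u'" using \<phi> uV unfolding EmbUC_def pq inj_on_def by auto
  then have "c \<noteq> c'" using assms pq by auto
  then obtain v where v: "c v \<noteq> c' v" by auto
  have ext: "c \<in> extensional (V-{u})" "c' \<in> extensional (V-{u})" using cc \<open>u = u'\<close> unfolding Col_def by (auto simp: PiE_def)
  have vV: "v \<in> V - {u}" using v ext by (metis extensional_arb)
  have "\<phi> v \<in> Tset ns ds E u c v" "\<phi> v \<in> Tset ns ds E u c' v"
    using \<phi> vV \<open>u = u'\<close> unfolding EmbUC_def pq by auto
  then show False using v by (auto simp: Tset_mem)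
qed

end


lemma sorted_wrt_all: "(\<forall>x\<in>set xs. \<forall>y\<in>set xs. R x y) \<Longrightarrow> sorted_wrt R xs"
  by (induction xs) auto

lemma Tset_rel:
  assumes "c x \<noteq> c y \<or> limv ns ds E u c x \<le> limv ns ds E u c y"
  shows "Tset ns ds E u c x \<inter> Tset ns ds E u c y = {} \<or> Tset ns ds E u c x \<subseteq> Tset ns ds E u c y"
proof (cases "c x = c y")
  case True
  then have "{..<limv ns ds E u c x} \<subseteq> {..<limv ns ds E u c y}" using assms by (auto intro: less_le_trans)
  then have "Tset ns ds E u c x \<subseteq> Tset ns ds E u c y" unfolding Tset_def using True by (metis image_mono)
  then show ?thesis by blast
next
  case False
  then show ?thesis unfolding Tset_def by auto
qed

lemma card_Tset: "card (Tset ns ds E u c v) = limv ns ds E u c v"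
  unfolding Tset_def by (subst card_image) (auto simp: inj_on_def)

context
  fixes r :: nat and ns ds :: "nat \<Rightarrow> nat" and V :: "'a set" and E :: "'a set set"
  assumes gV: "graph V E" and chr: "chromatic_number V E = r + 1" and dsns: "\<forall>i<r. ds i \<le> ns i"
begin

lemma finV: "finite V" using gV unfolding graph_def by simp

lemma EmbUC_card_G:
  assumes u: "u \<in> V" and c: "c \<in> Col r V E u"
  shows "card (EmbUC r ns ds V E u c) =
    card {g \<in> PiE (V-{u}) (Tset ns ds E u c). inj_on g (V-{u})}"
proof -
  have cr: "\<And>v. v \<in> V - {u} \<Longrightarrow> c v < r" using c unfolding Col_def by auto
  have TH: "\<And>v. v \<in> V - {u} \<Longrightarrow> Tset ns ds E u c v \<subseteq> host_V r ns"
  proof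
    fix v x assume v: "v \<in> V - {u}" and x: "x \<in> Tset ns ds E u c v"
    then obtain j where "x = Some (c v, j)" "j < limv ns ds E u c v" by (auto simp: Tset_mem)
    moreover have "limv ns ds E u c v \<le> ns (c v)" using dsns cr[OF v] by (auto simp: limv_def)
    ultimately show "x \<in> host_V r ns" using cr[OF v] HV_mem by auto
  qed
  have noneT: "\<And>v. None \<notin> Tset ns ds E u c v" by (auto simp: Tset_mem)
  have "bij_betw (\<lambda>\<phi>. restrict \<phi> (V-{u})) (EmbUC r ns ds V E u c)
      {g \<in> PiE (V-{u}) (Tset ns ds E u c). inj_on g (V-{u})}"
  proof (rule bij_betw_byWitness[where f' = "\<lambda>g. g(u := None)"])
    show "\<forall>\<phi>\<in>EmbUC r ns ds V E u c. (restrict \<phi> (V - {u}))(u := None) = \<phi>"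
      unfolding EmbUC_def by (auto simp: fun_eq_iff PiE_def extensional_def)
    show "\<forall>g\<in>{g \<in> PiE (V-{u}) (Tset ns ds E u c). inj_on g (V-{u})}. restrict (g(u := None)) (V - {u}) = g"
      by (auto simp: fun_eq_iff PiE_def extensional_def)
    show "(\<lambda>\<phi>. restrict \<phi> (V-{u})) ` EmbUC r ns ds V E u c
       \<subseteq> {g \<in> PiE (V-{u}) (Tset ns ds E u c). inj_on g (V-{u})}"
    proof (rule image_subsetI)
      fix \<phi> assume "\<phi> \<in> EmbUC r ns ds V E u c"
      then have "inj_on \<phi> V" "\<forall>v\<in>V-{u}. \<phi> v \<in> Tset ns ds E u c v" unfolding EmbUC_def by auto
      then show "restrict \<phi> (V-{u}) \<in> {g \<in> PiE (V-{u}) (Tset ns ds E u c). inj_on g (V-{u})}"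
        by (auto simp: restrict_PiE_iff intro: inj_on_subset)
    qed
    show "(\<lambda>g. g(u := None)) ` {g \<in> PiE (V-{u}) (Tset ns ds E u c). inj_on g (V-{u})}
       \<subseteq> EmbUC r ns ds V E u c"
    proof
      fix \<phi> assume "\<phi> \<in> (\<lambda>g. g(u := None)) ` {g \<in> PiE (V-{u}) (Tset ns ds E u c). inj_on g (V-{u})}"
      then obtain g where \<phi>: "\<phi> = g(u := None)" and g: "g \<in> PiE (V-{u}) (Tset ns ds E u c)" "inj_on g (V-{u})"
        by auto
      have gT: "\<And>v. v \<in> V - {u} \<Longrightarrow> g v \<in> Tset ns ds E u c v" using g by auto
      have "\<phi> \<in> V \<rightarrow>\<^sub>E host_V r ns"
      proof
        fix v assume v: "v \<in> V"
        show "\<phi> v \<in> host_V r ns"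
        proof (cases "v = u")
          case True then show ?thesis using \<phi> by (simp add: HV_mem)
        next
          case False then show ?thesis using \<phi> gT[of v] TH[of v] v by auto
        qed
      next
        fix v assume "v \<notin> V" then show "\<phi> v = undefined" using \<phi> g u by (auto simp: PiE_def extensional_def)
      qed
      moreover have "inj_on \<phi> V"
        unfolding inj_on_def
      proof (intro ballI impI)
        fix x y assume xy: "x \<in> V" "y \<in> V" "\<phi> x = \<phi> y"
        show "x = y"
        proof (cases "x = u"; cases "y = u")
          assume "x = u" "y \<noteq> u" then show ?thesis using xy \<phi> gT[of y] noneT by (metis DiffI fun_upd_apply singletonD)
        next
          assume "x \<noteq> u" "y = u" then show ?thesis using xy \<phi> gT[of x] noneT by (metis DiffI fun_upd_apply singletonD)
        next
          assume "x \<noteq> u" "y \<noteq> u" then show ?thesis using xy \<phi> g(2) by (auto simp: inj_on_def)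
        qed simp
      qed
      ultimately show "\<phi> \<in> EmbUC r ns ds V E u c" unfolding EmbUC_def using \<phi> gT by auto
    qed
  qed
  then show ?thesis by (rule bij_betw_same_card)
qed

lemma EmbUC_card_list:
  assumes u: "u \<in> V" and c: "c \<in> Col r V E u"
  shows "\<exists>xs. distinct xs \<and> set xs = V - {u} \<and> card (EmbUC r ns ds V E u c) =
    (\<Prod>j<length xs. limv ns ds E u c (xs!j) - card {x\<in>set (take j xs). Tset ns ds E u c x \<subseteq> Tset ns ds E u c (xs!j)})"
proof -
  let ?N = "{v \<in> V - {u}. {u,v} \<in> E}" and ?M = "{v \<in> V - {u}. {u,v} \<notin> E}"
  have "finite ?N" "finite ?M" using finV by auto
  then obtain ys zs where ys: "set ys = ?N" "distinct ys" and zs: "set zs = ?M" "distinct zs"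
    using finite_distinct_list by meson
  let ?xs = "ys @ zs"
  have dist: "distinct ?xs" using ys zs by auto
  have set: "set ?xs = V - {u}" using ys zs by auto
  let ?T = "Tset ns ds E u c"
  have cr: "\<And>v. v \<in> V - {u} \<Longrightarrow> c v < r" using c unfolding Col_def by auto
  have "sorted_wrt (\<lambda>x y. ?T x \<inter> ?T y = {} \<or> ?T x \<subseteq> ?T y) ?xs"
    unfolding sorted_wrt_append
  proof (intro conjI sorted_wrt_all ballI)
    fix x y assume "x \<in> set ys" "y \<in> set ys"
    then show "?T x \<inter> ?T y = {} \<or> ?T x \<subseteq> ?T y" using ys by (intro Tset_rel) (auto simp: limv_def)
  next
    fix x y assume "x \<in> set zs" "y \<in> set zs"
    then show "?T x \<inter> ?T y = {} \<or> ?T x \<subseteq> ?T y" using zs by (intro Tset_rel) (auto simp: limv_def)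
  next
    fix x y assume x: "x \<in> set ys" and y: "y \<in> set zs"
    have "c x \<noteq> c y \<or> limv ns ds E u c x \<le> limv ns ds E u c y"
      using x y ys zs dsns cr[of x] by (auto simp: limv_def)
    then show "?T x \<inter> ?T y = {} \<or> ?T x \<subseteq> ?T y" by (rule Tset_rel)
  qed
  moreover have "\<forall>x\<in>set ?xs. finite (?T x)" by (simp add: Tset_def)
  ultimately have "card {g \<in> PiE (set ?xs) ?T. inj_on g (set ?xs)} =
    (\<Prod>j<length ?xs. card (?T (?xs!j)) - card {x\<in>set (take j ?xs). ?T x \<subseteq> ?T (?xs!j)})"
    using dist by (intro card_inj_PiE_list)
  then show ?thesis using dist set EmbUC_card_G[OF u c] by (intro exI[of _ ?xs]) (simp add: card_Tset)
qed

end


definition wv :: "nat \<Rightarrow> (nat \<Rightarrow> real) \<Rightarrow> 'a set set \<Rightarrow> 'a \<Rightarrow> ('a \<Rightarrow> nat) \<Rightarrow> 'a \<Rightarrow> real" where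
  "wv r \<xi> E u c v = (if {u,v} \<in> E then \<xi> (c v) else 1 / real r)"

lemma nat_diff_real1: "real a - real b \<le> real (a - b)"
  by (cases "b \<le> a") (simp_all add: of_nat_diff)

lemma nat_diff_real2: "real (a - b) \<le> real a"
  by simp

lemma approx_step:
  fixes F T n t \<delta> fr :: real
  assumes "n > 0" "T - fr \<le> F" "F \<le> T" "\<bar>t - T/n\<bar> \<le> \<delta>" "fr/n \<le> fr*\<delta>" "fr \<ge> 0"
  shows "\<bar>F/n - t\<bar> \<le> (fr+1)*\<delta>"
proof -
  have 1: "F/n \<le> T/n" using assms by (simp add: divide_right_mono)
  have "(T - fr)/n \<le> F/n" using assms by (simp add: divide_right_mono)
  then have 2: "T/n - fr/n \<le> F/n" by (simp add: diff_divide_distrib)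
  show ?thesis using 1 2 assms(4,5) by (simp add: abs_le_iff algebra_simps)
qed

context
  fixes r :: nat and ns ds :: "nat \<Rightarrow> nat" and V :: "'a set" and E :: "'a set set"
  assumes gV: "graph V E" and chr: "chromatic_number V E = r + 1" and dsns: "\<forall>i<r. ds i \<le> ns i"
begin

lemma finV': "finite V" using gV unfolding graph_def by simp

lemma Col_crit:
  assumes u: "u \<in> V" and ne: "Col r V E u \<noteq> {}"
  shows "critical_vertex r V E u"
proof -
  obtain c where c: "c \<in> Col r V E u" using ne by blast
  have pc: "proper_coloring (V-{u}) (del_vertex_edges E u) r c" using c unfolding Col_def by auto
  let ?k = "chromatic_number (V-{u}) (del_vertex_edges E u)"
  have le: "?k \<le> r" using chrom_le[OF pc] .
  have nl: "\<forall>x. {x} \<notin> del_vertex_edges E u" using graph_noloop[OF gV] unfolding del_vertex_edges_def by auto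
  obtain c' where c': "proper_coloring (V-{u}) (del_vertex_edges E u) ?k c'"
    using chrom_ex[OF _ nl] finV' by blast
  have "\<not> ?k < r"
  proof
    assume kr: "?k < r"
    have "proper_coloring V E (Suc ?k) (c'(u := ?k))"
      unfolding proper_coloring_def
    proof (intro conjI ballI impI)
      fix v assume v: "v \<in> V" show "(c'(u := ?k)) v < Suc ?k"
      proof (cases "v = u")
        case False
        then have "c' v < ?k" using c' v unfolding proper_coloring_def by blast
        then show ?thesis using False by simp
      qed simp
    next
      fix a b assume ab: "a \<in> V" "b \<in> V" "{a,b} \<in> E"
      then have "a \<noteq> b" using graph_noloop[OF gV] by auto
      show "(c'(u := ?k)) a \<noteq> (c'(u := ?k)) b"
      proof (cases "a = u \<or> b = u")
        case True
        have lt: "\<And>x. x \<in> V - {u} \<Longrightarrow> c' x < ?k" using c' unfolding proper_coloring_def by blast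
        show ?thesis
        proof (cases "a = u")
          case True
          then have "b \<in> V - {u}" using ab \<open>a \<noteq> b\<close> by auto
          then show ?thesis using lt[of b] True \<open>a \<noteq> b\<close> by auto
        next
          case False
          then have "b = u" "a \<in> V - {u}" using \<open>a = u \<or> b = u\<close> ab by auto
          then show ?thesis using lt[of a] False by auto
        qed
      next
        case False
        then have "{a,b} \<in> del_vertex_edges E u" using ab unfolding del_vertex_edges_def by auto
        then show ?thesis using c' ab False unfolding proper_coloring_def by auto
      qed
    qed
    then have "chromatic_number V E \<le> Suc ?k" by (rule chrom_le)
    then show False using chr kr by simp
  qed
  then show ?thesis unfolding critical_vertex_def using le u by simp
qed

lemma prod_conv:
  assumes u: "u \<in> V" and c: "c \<in> Col r V E u"
  shows "(\<Prod>i<r. (1 / real r ^ card {v \<in> V - {u}. {u, v} \<notin> E \<and> c v = i}) *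
                   \<xi> i ^ card {v \<in> V - {u}. {u, v} \<in> E \<and> c v = i})
       = (\<Prod>v\<in>V-{u}. wv r \<xi> E u c v)"
proof -
  have cr: "c ` (V - {u}) \<subseteq> {..<r}" using c unfolding Col_def by auto
  have fin: "finite (V - {u})" using finV' by simp
  have "(\<Prod>v\<in>V-{u}. wv r \<xi> E u c v) = (\<Prod>i<r. \<Prod>v\<in>{x. x \<in> V - {u} \<and> c x = i}. wv r \<xi> E u c v)"
    using prod.group[OF fin _ cr, of "wv r \<xi> E u c"] by simp
  also have "\<dots> = (\<Prod>i<r. (1 / real r ^ card {v \<in> V - {u}. {u, v} \<notin> E \<and> c v = i}) *
                   \<xi> i ^ card {v \<in> V - {u}. {u, v} \<in> E \<and> c v = i})"
  proof (rule prod.cong[OF refl])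
    fix i assume "i \<in> {..<r}"
    let ?S = "{x. x \<in> V - {u} \<and> c x = i}"
    have finS: "finite ?S" using fin by simp
    have "(\<Prod>v\<in>?S. wv r \<xi> E u c v) = (\<Prod>v\<in>?S. if {u,v} \<in> E then \<xi> i else 1 / real r)"
      by (rule prod.cong) (auto simp: wv_def)
    also have "\<dots> = (\<Prod>v\<in>?S \<inter> {v. {u,v} \<in> E}. \<xi> i) * (\<Prod>v\<in>?S \<inter> - {v. {u,v} \<in> E}. 1 / real r)"
      by (rule prod.If_cases[OF finS])
    also have "?S \<inter> {v. {u,v} \<in> E} = {v \<in> V - {u}. {u, v} \<in> E \<and> c v = i}" by auto
    also have "?S \<inter> - {v. {u,v} \<in> E} = {v \<in> V - {u}. {u, v} \<notin> E \<and> c v = i}" by auto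
    finally show "(\<Prod>v\<in>?S. wv r \<xi> E u c v) = (1 / real r ^ card {v \<in> V - {u}. {u, v} \<notin> E \<and> c v = i}) *
                   \<xi> i ^ card {v \<in> V - {u}. {u, v} \<in> E \<and> c v = i}"
      by (simp add: power_one_over mult.commute)
  qed
  finally show ?thesis by simp
qed

lemma pair_approx:
  fixes n :: nat and \<delta> :: real and \<xi> :: "nat \<Rightarrow> real"
  assumes u: "u \<in> V" and c: "c \<in> Col r V E u" and n: "n > 0" and d1: "\<delta> \<le> 1" and dn: "1 / real n \<le> \<delta>"
    and nsn: "\<forall>i<r. ns i \<le> n" and nsa: "\<forall>i<r. \<bar>real (ns i) - real n / real r\<bar> \<le> \<delta> * real n"
    and xia: "\<forall>i<r. \<bar>\<xi> i - real (ds i) / real n\<bar> \<le> \<delta>"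
  shows "\<bar>real (card (EmbUC r ns ds V E u c)) - real n ^ (card V - 1) * (\<Prod>v\<in>V-{u}. wv r \<xi> E u c v)\<bar>
     \<le> real n ^ (card V - 1) * (real (card V) * 2 ^ card V * ((real (card V) + 1) * \<delta>))"
proof -
  let ?f = "card V"
  obtain xs where xs: "distinct xs" "set xs = V - {u}" and cardeq: "card (EmbUC r ns ds V E u c) =
    (\<Prod>j<length xs. limv ns ds E u c (xs!j) - card {x\<in>set (take j xs). Tset ns ds E u c x \<subseteq> Tset ns ds E u c (xs!j)})"
    using EmbUC_card_list[OF gV chr dsns u c] by blast
  define F where "F j = limv ns ds E u c (xs!j) - card {x\<in>set (take j xs). Tset ns ds E u c x \<subseteq> Tset ns ds E u c (xs!j)}" for j
  define L where "L = length xs"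
  have L: "L = ?f - 1" using xs u distinct_card[OF xs(1)] finV' unfolding L_def by simp
  have Lf: "L \<le> ?f" using L by simp
  define a where "a j = real (F j) / real n" for j
  define b where "b j = wv r \<xi> E u c (xs!j)" for j
  have rn: "real n > 0" using n by simp
  have cr: "\<And>v. v \<in> V - {u} \<Longrightarrow> c v < r" using c unfolding Col_def by auto
  have "real (card (EmbUC r ns ds V E u c)) = (\<Prod>j<L. real n * a j)"
    unfolding cardeq L_def a_def F_def using rn by (simp add: of_nat_prod)
  also have "\<dots> = real n ^ L * (\<Prod>j<L. a j)" by (simp add: prod.distrib)
  finally have C1: "real (card (EmbUC r ns ds V E u c)) = real n ^ L * (\<Prod>j<L. a j)" .
  have C2: "(\<Prod>v\<in>V-{u}. wv r \<xi> E u c v) = (\<Prod>j<L. b j)"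
    unfolding b_def L_def
    using prod.reindex_bij_betw[OF bij_betw_nth[OF xs(1) refl refl], of "wv r \<xi> E u c"] xs(2) by simp
  have fr: "real ?f / real n \<le> real ?f * \<delta>"
    using mult_left_mono[OF dn, of "real ?f"] by simp
  have bnd: "\<bar>a j - b j\<bar> \<le> (real ?f + 1) * \<delta> \<and> \<bar>a j\<bar> \<le> 2 \<and> \<bar>b j\<bar> \<le> 2" if j: "j < L" for j
  proof -
    let ?v = "xs!j"
    have v: "?v \<in> V - {u}" using j xs unfolding L_def by (metis nth_mem)
    let ?i = "c ?v"
    have i: "?i < r" using cr[OF v] .
    have k: "card {x\<in>set (take j xs). Tset ns ds E u c x \<subseteq> Tset ns ds E u c ?v} \<le> ?f"
    proof -
      have "card {x\<in>set (take j xs). Tset ns ds E u c x \<subseteq> Tset ns ds E u c ?v} \<le> card (set (take j xs))"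
        by (rule card_mono) auto
      also have "\<dots> \<le> length (take j xs)" by (rule card_length)
      also have "\<dots> \<le> ?f" using j Lf unfolding L_def by simp
      finally show ?thesis .
    qed
    have F1: "real (limv ns ds E u c ?v) - real ?f \<le> real (F j)"
      using nat_diff_real1[of "limv ns ds E u c ?v" "card {x\<in>set (take j xs). Tset ns ds E u c x \<subseteq> Tset ns ds E u c ?v}"] k
      unfolding F_def by linarith
    have F2: "real (F j) \<le> real (limv ns ds E u c ?v)" unfolding F_def by (rule nat_diff_real2)
    have limn: "limv ns ds E u c ?v \<le> n" using dsns nsn i by (auto simp: limv_def intro: le_trans)
    have a0: "0 \<le> a j" unfolding a_def by simp
    have a1: "a j \<le> 1" unfolding a_def using F2 limn rn by (simp add: divide_le_eq_1)
    show ?thesis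
    proof (cases "{u, ?v} \<in> E")
      case True
      have bb: "b j = \<xi> ?i" unfolding b_def wv_def using True by simp
      have lim: "limv ns ds E u c ?v = ds ?i" unfolding limv_def using True by simp
      have x: "\<bar>\<xi> ?i - real (ds ?i) / real n\<bar> \<le> \<delta>" using xia i by blast
      have "\<bar>a j - b j\<bar> \<le> (real ?f + 1) * \<delta>" unfolding a_def bb
        by (rule approx_step[OF rn _ _ x fr]) (use F1 F2 lim in auto)
      moreover have "\<bar>b j\<bar> \<le> 2"
      proof -
        have "real (ds ?i) / real n \<le> 1" using limn lim rn by (simp add: divide_le_eq_1)
        moreover have "0 \<le> real (ds ?i) / real n" by simp
        ultimately show ?thesis using x d1 bb by linarith
      qed
      ultimately show ?thesis using a0 a1 by simp
    next
      case False
      have bb: "b j = 1 / real r" unfolding b_def wv_def using False by simp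
      have lim: "limv ns ds E u c ?v = ns ?i" unfolding limv_def using False by simp
      have x: "\<bar>1 / real r - real (ns ?i) / real n\<bar> \<le> \<delta>"
      proof -
        have "real (ns ?i) / real n - 1 / real r = (real (ns ?i) - real n / real r) / real n"
          using rn by (simp add: field_simps)
        then have "\<bar>real (ns ?i) / real n - 1 / real r\<bar> = \<bar>real (ns ?i) - real n / real r\<bar> / real n"
          using rn by simp
        then have "\<bar>1 / real r - real (ns ?i) / real n\<bar> = \<bar>real (ns ?i) - real n / real r\<bar> / real n"
          by (metis abs_minus_commute)
        also have "\<dots> \<le> \<delta>"
        proof -
          have "\<bar>real (ns ?i) - real n / real r\<bar> \<le> \<delta> * real n" using nsa i by blast
          then show ?thesis using rn by (simp add: pos_divide_le_eq)
        qed
        finally show ?thesis .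
      qed
      have "\<bar>a j - b j\<bar> \<le> (real ?f + 1) * \<delta>" unfolding a_def bb
        by (rule approx_step[OF rn _ _ x fr]) (use F1 F2 lim in auto)
      moreover have "\<bar>b j\<bar> \<le> 2"
      proof -
        have "real r \<ge> 1" using i by simp
        then have "1 / real r \<le> 1" by simp
        then show ?thesis using bb by simp
      qed
      ultimately show ?thesis using a0 a1 by simp
    qed
  qed
  have "\<bar>(\<Prod>j<L. a j) - (\<Prod>j<L. b j)\<bar> \<le> real L * 2 ^ L * ((real ?f + 1) * \<delta>)"
    by (rule prod_approx) (use bnd in auto)
  also have "\<dots> \<le> real ?f * 2 ^ ?f * ((real ?f + 1) * \<delta>)"
  proof -
    have d0: "0 \<le> \<delta>" using dn rn by (meson order.trans zero_le_divide_1_iff of_nat_0_le_iff)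
    have "real L * 2 ^ L \<le> real ?f * (2::real) ^ ?f"
      by (rule mult_mono) (use Lf in \<open>auto intro: power_increasing\<close>)
    then show ?thesis using d0 by (intro mult_right_mono) auto
  qed
  finally have P: "\<bar>(\<Prod>j<L. a j) - (\<Prod>j<L. b j)\<bar> \<le> real ?f * 2 ^ ?f * ((real ?f + 1) * \<delta>)" .
  have "\<bar>real (card (EmbUC r ns ds V E u c)) - real n ^ L * (\<Prod>v\<in>V-{u}. wv r \<xi> E u c v)\<bar>
      = real n ^ L * \<bar>(\<Prod>j<L. a j) - (\<Prod>j<L. b j)\<bar>"
    unfolding C1 C2 by (simp add: abs_mult right_diff_distrib[symmetric])
  also have "\<dots> \<le> real n ^ L * (real ?f * 2 ^ ?f * ((real ?f + 1) * \<delta>))"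
    by (rule mult_left_mono[OF P]) simp
  finally show ?thesis unfolding L .
qed

end


theorem lemma5:
  fixes r :: nat and V :: "'a set" and E :: "'a set set" and f :: nat
  assumes "r \<ge> 2" and "graph V E" and "r_critical r V E" and "f = card V"
  shows "\<forall>\<epsilon>>0. \<exists>\<delta>>0. \<forall>(ns :: nat \<Rightarrow> nat) (ds :: nat \<Rightarrow> nat) (\<xi> :: nat \<Rightarrow> real) (n :: nat).
     n = (\<Sum>i<r. ns i) \<and> real n > 1 / \<delta> \<and>
     (\<forall>i<r. ds i \<le> ns i \<and> \<bar>real (ns i) - real n / real r\<bar> \<le> \<delta> * real n \<and>
            \<bar>\<xi> i - real (ds i) / real n\<bar> \<le> \<delta>)
     \<longrightarrow> \<bar>real (F_count V E r ns ds) - real n ^ (f - 1) * P_F V E r \<xi>\<bar> < \<epsilon> * real n ^ (f - 1)"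
proof -
  have gV: "graph V E" using assms(2) .
  have chr: "chromatic_number V E = r + 1" using assms(3) unfolding r_critical_def by simp
  have finV: "finite V" using gV unfolding graph_def by simp
  define Sig where "Sig = Sigma V (Col r V E)"
  have finCol: "finite (Col r V E u)" for u
    by (rule finite_subset[of _ "(V-{u}) \<rightarrow>\<^sub>E {..<r}"]) (auto simp: Col_def finV intro!: finite_PiE)
  have finSig: "finite Sig" unfolding Sig_def using finV finCol by auto
  define K where "K = real (card Sig)"
  define B where "B = real f * 2 ^ f * (real f + 1)"
  have K0: "K \<ge> 0" and B0: "B \<ge> 0" unfolding K_def B_def by auto
  show ?thesis
  proof (intro allI impI)
    fix \<epsilon> :: real assume \<epsilon>: "\<epsilon> > 0"
    define \<delta> where "\<delta> = min 1 (\<epsilon> / (2 * (K+1) * (B+1)))"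
    have pos: "2 * (K+1) * (B+1) > 0" using K0 B0 by (simp add: add_pos_nonneg)
    have \<delta>0: "\<delta> > 0" unfolding \<delta>_def using \<epsilon> pos by simp
    have \<delta>1: "\<delta> \<le> 1" unfolding \<delta>_def by simp
    have KBd: "K * (B * \<delta>) < \<epsilon>"
    proof -
      have "K * B \<le> (K+1) * (B+1)" using K0 B0 by (intro mult_mono) auto
      then have "K * (B * \<delta>) \<le> (K+1) * (B+1) * \<delta>" using \<delta>0
        by (metis mult.assoc less_eq_real_def mult_right_mono)
      also have "\<dots> \<le> (K+1) * (B+1) * (\<epsilon> / (2 * (K+1) * (B+1)))"
        unfolding \<delta>_def using K0 B0 by (intro mult_left_mono) auto
      also have "\<dots> = \<epsilon> / 2" using pos by (simp add: field_simps)
      finally show ?thesis using \<epsilon> by simp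
    qed
    show "\<exists>\<delta>>0. \<forall>(ns :: nat \<Rightarrow> nat) (ds :: nat \<Rightarrow> nat) (\<xi> :: nat \<Rightarrow> real) (n :: nat).
     n = (\<Sum>i<r. ns i) \<and> real n > 1 / \<delta> \<and>
     (\<forall>i<r. ds i \<le> ns i \<and> \<bar>real (ns i) - real n / real r\<bar> \<le> \<delta> * real n \<and>
            \<bar>\<xi> i - real (ds i) / real n\<bar> \<le> \<delta>)
     \<longrightarrow> \<bar>real (F_count V E r ns ds) - real n ^ (f - 1) * P_F V E r \<xi>\<bar> < \<epsilon> * real n ^ (f - 1)"
    proof (intro exI[of _ \<delta>] conjI allI impI \<delta>0)
      fix ns ds :: "nat \<Rightarrow> nat" and \<xi> :: "nat \<Rightarrow> real" and n :: nat
      assume H: "n = (\<Sum>i<r. ns i) \<and> real n > 1 / \<delta> \<and>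
        (\<forall>i<r. ds i \<le> ns i \<and> \<bar>real (ns i) - real n / real r\<bar> \<le> \<delta> * real n \<and>
            \<bar>\<xi> i - real (ds i) / real n\<bar> \<le> \<delta>)"
      have nsum: "n = (\<Sum>i<r. ns i)" and n1: "real n > 1 / \<delta>" using H by auto
      have dsns: "\<forall>i<r. ds i \<le> ns i" and nsa: "\<forall>i<r. \<bar>real (ns i) - real n / real r\<bar> \<le> \<delta> * real n"
        and xia: "\<forall>i<r. \<bar>\<xi> i - real (ds i) / real n\<bar> \<le> \<delta>" using H by auto
      have rn: "real n > 0" using n1 \<delta>0 by (meson less_trans zero_less_divide_1_iff)
      then have n0: "n > 0" by simp
      have "1 < \<delta> * real n" using n1 \<delta>0 by (simp add: divide_less_eq mult.commute)
      then have dn: "1 / real n \<le> \<delta>" using rn by (simp add: divide_le_eq mult.commute)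
      have nsn: "\<forall>i<r. ns i \<le> n"
      proof (intro allI impI)
        fix i assume "i < r"
        then show "ns i \<le> n" unfolding nsum by (intro member_le_sum) auto
      qed
      let ?HV = "host_V r ns" and ?HE = "host_E r ns ds"
      have gH: "graph ?HV ?HE" by (rule graph_host[OF dsns])
      have finH: "finite ?HV" using gH unfolding graph_def by simp
      let ?N = "real n ^ (f - 1)"
      have N0: "?N > 0" using rn by simp
      have EC: "card (Emb V E ?HV ?HE) = F_count V E r ns ds * num_aut V E"
        unfolding F_count_def by (rule emb_count[OF gV gH])
      have finU: "finite (EmbUC r ns ds V E (fst p) (snd p))" for p
        by (rule finite_subset[of _ "V \<rightarrow>\<^sub>E ?HV"]) (auto simp: EmbUC_def finV finH intro!: finite_PiE)
      have decomp: "card (Emb V E ?HV ?HE) = (\<Sum>p\<in>Sig. card (EmbUC r ns ds V E (fst p) (snd p)))"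
        unfolding Emb_decomp[OF gV chr dsns] Sig_def
        by (rule card_UN_disjoint) (use finSig finU EmbUC_disj[OF gV chr dsns] in \<open>auto simp: Sig_def\<close>)
      define W where "W p = (\<Prod>v\<in>V-{fst p}. wv r \<xi> E (fst p) (snd p) v)" for p
      have PF: "P_F V E r \<xi> = (1 / real (num_aut V E)) * (\<Sum>p\<in>Sig. W p)"
      proof -
        have colset: "\<And>u. {c \<in> (V - {u}) \<rightarrow>\<^sub>E {..<r}. proper_coloring (V - {u}) (del_vertex_edges E u) r c} = Col r V E u"
          by (simp add: Col_def)
        have "(\<Sum>u\<in>{u\<in>V. critical_vertex r V E u}. \<Sum>c\<in>Col r V E u.
          \<Prod>i<r. (1 / real r ^ card {v \<in> V - {u}. {u, v} \<notin> E \<and> c v = i}) *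
                   \<xi> i ^ card {v \<in> V - {u}. {u, v} \<in> E \<and> c v = i})
          = (\<Sum>u\<in>{u\<in>V. critical_vertex r V E u}. \<Sum>c\<in>Col r V E u. W (u,c))"
        proof (intro sum.cong refl)
          fix u c assume u: "u \<in> {u\<in>V. critical_vertex r V E u}" and c: "c \<in> Col r V E u"
          show "(\<Prod>i<r. (1 / real r ^ card {v \<in> V - {u}. {u, v} \<notin> E \<and> c v = i}) *
                   \<xi> i ^ card {v \<in> V - {u}. {u, v} \<in> E \<and> c v = i}) = W (u,c)"
            unfolding W_def fst_conv snd_conv using u c by (intro prod_conv[OF gV chr dsns]) auto
        qed
        also have "\<dots> = (\<Sum>u\<in>V. \<Sum>c\<in>Col r V E u. W (u,c))"
        proof (rule sum.mono_neutral_left[OF finV])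
          show "\<forall>i\<in>V - {u \<in> V. critical_vertex r V E u}. (\<Sum>c\<in>Col r V E i. W (i, c)) = 0"
            using Col_crit[OF gV chr dsns] by (metis (no_types, lifting) DiffD1 DiffD2 mem_Collect_eq sum.empty)
        qed auto
        also have "\<dots> = (\<Sum>p\<in>Sig. W p)"
          unfolding Sig_def using sum.Sigma[OF finV, of "Col r V E" "\<lambda>u c. W (u,c)"] finCol by simp
        finally show ?thesis unfolding P_F_def colset by simp
      qed
      have approx: "\<bar>real (card (Emb V E ?HV ?HE)) - ?N * (\<Sum>p\<in>Sig. W p)\<bar> \<le> K * (?N * (B * \<delta>))"
      proof -
        have each: "\<bar>real (card (EmbUC r ns ds V E (fst p) (snd p))) - ?N * W p\<bar> \<le> ?N * (B * \<delta>)"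
          if p: "p \<in> Sig" for p
        proof -
          have u: "fst p \<in> V" and c: "snd p \<in> Col r V E (fst p)" using p unfolding Sig_def by auto
          have eqB: "B * \<delta> = real (card V) * 2 ^ card V * ((real (card V) + 1) * \<delta>)"
            unfolding B_def assms(4) by (simp add: algebra_simps)
          have pa: "\<bar>real (card (EmbUC r ns ds V E (fst p) (snd p))) - real n ^ (card V - 1) * (\<Prod>v\<in>V-{fst p}. wv r \<xi> E (fst p) (snd p) v)\<bar>
     \<le> real n ^ (card V - 1) * (real (card V) * 2 ^ card V * ((real (card V) + 1) * \<delta>))"
            by (rule pair_approx[OF gV chr dsns u c n0 \<delta>1 dn nsn nsa xia])
          show ?thesis unfolding W_def assms(4) eqB by (rule pa)
        qed
        have "real (card (Emb V E ?HV ?HE)) - ?N * (\<Sum>p\<in>Sig. W p)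
            = (\<Sum>p\<in>Sig. real (card (EmbUC r ns ds V E (fst p) (snd p))) - ?N * W p)"
          unfolding decomp by (simp add: sum_subtractf sum_distrib_left)
        then have "\<bar>real (card (Emb V E ?HV ?HE)) - ?N * (\<Sum>p\<in>Sig. W p)\<bar>
            \<le> (\<Sum>p\<in>Sig. \<bar>real (card (EmbUC r ns ds V E (fst p) (snd p))) - ?N * W p\<bar>)"
          by (simp only: sum_abs)
        also have "\<dots> \<le> (\<Sum>p\<in>Sig. ?N * (B * \<delta>))" by (rule sum_mono) (rule each)
        also have "\<dots> = K * (?N * (B * \<delta>))" unfolding K_def by simp
        finally show ?thesis .
      qed
      have A1: "num_aut V E \<ge> 1"
      proof -
        have "restrict id V \<in> Autset V E" unfolding Autset_def
          by (auto simp: bij_betw_def inj_on_def)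
        moreover have "finite (Autset V E)"
          by (rule finite_subset[of _ "V \<rightarrow>\<^sub>E V"]) (auto simp: Autset_def finV intro!: finite_PiE)
        ultimately have "card (Autset V E) \<ge> 1" by (metis One_nat_def Suc_leI card_gt_0_iff empty_iff)
        then show ?thesis by (simp add: num_aut_def Autset_def)
      qed
      define A where "A = real (num_aut V E)"
      have A1': "A \<ge> 1" unfolding A_def using A1 by simp
      have "real (F_count V E r ns ds) - ?N * P_F V E r \<xi>
          = (real (card (Emb V E ?HV ?HE)) - ?N * (\<Sum>p\<in>Sig. W p)) / A"
        unfolding PF EC A_def[symmetric] using A1' by (simp add: field_simps A_def)
      then have "\<bar>real (F_count V E r ns ds) - ?N * P_F V E r \<xi>\<bar>
          = \<bar>real (card (Emb V E ?HV ?HE)) - ?N * (\<Sum>p\<in>Sig. W p)\<bar> / A" using A1' by simp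
      also have "\<dots> \<le> \<bar>real (card (Emb V E ?HV ?HE)) - ?N * (\<Sum>p\<in>Sig. W p)\<bar>"
        using divide_left_mono[OF A1', of "\<bar>real (card (Emb V E ?HV ?HE)) - ?N * (\<Sum>p\<in>Sig. W p)\<bar>"] A1' by simp
      also have "\<dots> \<le> K * (?N * (B * \<delta>))" by (rule approx)
      also have "\<dots> = ?N * (K * (B * \<delta>))" by (simp add: algebra_simps)
      also have "\<dots> < ?N * \<epsilon>" using KBd N0 by simp
      finally show "\<bar>real (F_count V E r ns ds) - ?N * P_F V E r \<xi>\<bar> < \<epsilon> * ?N" by (simp add: mult.commute)
    qed
  qed
qed


end
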